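(* Let $\mathcal{D}=\{(\mathbf{x}_i,y_i)\}_{i=1}^n$ be a training set, $f(\mathbf{x};\mathbf{w})$ a model, $\ell$ a loss, and $\mathcal{L}(\mathcal{D};\mathbf{w})=\frac{1}{n}\sum_{i=1}^n\ell(f(\mathbf{x}_i;\mathbf{w}),y_i)$. Assume $\mathcal{L}(\mathcal{D};\cdot)$ is $\beta$-smooth, i.e. $\|\nabla\mathcal{L}(\mathcal{D};\mathbf{w})-\nabla\mathcal{L}(\mathcal{D};\mathbf{v})\|\le\beta\|\mathbf{w}-\mathbf{v}\|$. Consider an algorithm $\mathcal{A}$ with full-batch gradients: for $t=0,\dots,T-1$, with $\xi_t\in\{0,1\}$ indicating whether iteration $t$ uses a SAM update, $$\mathbf{w}_{t+1}=\mathbf{w}_t-\eta\Big((1-\xi_t)\nabla\mathcal{L}(\mathcal{D};\mathbf{w}_t)+\xi_t\nabla\mathcal{L}\big(\mathcal{D};\mathbf{w}_t+\rho\nabla\mathcal{L}(\mathcal{D};\mathbf{w}_t)\big)\Big).$$ If $\rho<\frac{1}{2\beta}$ and $\eta<\frac{1}{\beta}$, then $$\min_{0\le t\le T-1}\|\nabla\mathcal{L}(\mathcal{D};\mathbf{w}_t)\|^2\le\frac{\mathcal{L}(\mathcal{D};\mathbf{w}_0)-\mathcal{L}(\mathcal{D};\mathbf{w}_T)}{T\eta\left(1-\frac{\beta\eta}{2}-\beta\rho\zeta\right)},$$ where $\zeta=\frac{1}{T}\sum_{t=0}^{T-1}\xi_t\in[0,1]$.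
   Context: $\eta>0$ is the stepsize and $\rho>0$ the SAM perturbation radius; the rule choosing $\xi_t$ is arbitrary. *)

theory Defs
  imports "HOL-Analysis.Analysis"
begin

definition emp_loss ::
  "('p \<Rightarrow> 'y \<Rightarrow> real) \<Rightarrow> ('x \<Rightarrow> 'w \<Rightarrow> 'p) \<Rightarrow> nat \<Rightarrow> (nat \<Rightarrow> 'x \<times> 'y) \<Rightarrow> 'w \<Rightarrow> real"
  where "emp_loss loss f n D w = (1 / real n) * (\<Sum>i<n. loss (f (fst (D i)) w) (snd (D i)))"

end

theory Submission
  imports Defs
begin
lemma descent:
  fixes L :: "'w::euclidean_space \<Rightarrow> real" and G :: "'w \<Rightarrow> 'w"
  assumes grad: "\<And>v. GDERIV L v :> G v"
    and smooth: "\<And>u v. norm (G u - G v) \<le> \<beta> * norm (u - v)"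
  shows "L y \<le> L x + G x \<bullet> (y - x) + \<beta> / 2 * (norm (y - x))\<^sup>2"
proof -
  define d where "d = y - x"
  define \<phi> where "\<phi> s = L (x + s *\<^sub>R d) - s * (G x \<bullet> d) - \<beta> / 2 * s\<^sup>2 * (norm d)\<^sup>2" for s
  have der: "(\<phi> has_real_derivative (G (x + s *\<^sub>R d) \<bullet> d - G x \<bullet> d - \<beta> * s * (norm d)\<^sup>2)) (at s)" for s
  proof -
    have l: "(L has_derivative (\<lambda>h. h \<bullet> G (x + s *\<^sub>R d))) (at (x + s *\<^sub>R d))"
      using grad by (simp add: gderiv_def)
    have p: "((\<lambda>s. x + s *\<^sub>R d) has_derivative (\<lambda>h. h *\<^sub>R d)) (at s)"
      by (auto intro!: derivative_eq_intros)
    have c: "((\<lambda>s. L (x + s *\<^sub>R d)) has_derivative (\<lambda>h. (h *\<^sub>R d) \<bullet> G (x + s *\<^sub>R d))) (at s)"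
      using diff_chain_at[OF p l] by (simp add: o_def)
    have e: "(\<lambda>h. (h *\<^sub>R d) \<bullet> G (x + s *\<^sub>R d)) = (*) (G (x + s *\<^sub>R d) \<bullet> d)"
      by (rule ext) (simp add: inner_commute)
    have c': "((\<lambda>s. L (x + s *\<^sub>R d)) has_real_derivative (G (x + s *\<^sub>R d) \<bullet> d)) (at s)"
      using c unfolding e has_field_derivative_def .
    show ?thesis unfolding \<phi>_def
      by (rule derivative_eq_intros c' refl)+ (auto simp: power2_eq_square)
  qed
  have "\<phi> 1 \<le> \<phi> 0"
  proof (rule DERIV_nonpos_imp_nonincreasing[of 0 1 \<phi>])
    fix s :: real assume s: "0 \<le> s" "s \<le> 1"
    have "G (x + s *\<^sub>R d) \<bullet> d - G x \<bullet> d = (G (x + s *\<^sub>R d) - G x) \<bullet> d"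
      by (simp add: inner_diff_left)
    also have "\<dots> \<le> norm (G (x + s *\<^sub>R d) - G x) * norm d" by (rule norm_cauchy_schwarz)
    also have "\<dots> \<le> \<beta> * norm (s *\<^sub>R d) * norm d"
      using smooth[of "x + s *\<^sub>R d" x] by (simp add: mult_right_mono)
    also have "\<dots> = \<beta> * s * (norm d)\<^sup>2" using s by (simp add: power2_eq_square)
    finally show "\<exists>y. (\<phi> has_real_derivative y) (at s) \<and> y \<le> 0"
      using der[of s] by (intro exI[of _ "G (x + s *\<^sub>R d) \<bullet> d - G x \<bullet> d - \<beta> * s * (norm d)\<^sup>2"]) auto
  qed simp
  thus ?thesis by (simp add: \<phi>_def d_def inner_commute)
qed
lemma alg:
  fixes \<beta> \<eta> \<rho> a ne p :: real
  assumes "\<beta> > 0" "\<eta> > 0" "\<rho> > 0" "\<beta> * \<rho> < 1/2" "\<beta> * \<eta> < 1"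
    and "a \<ge> 0" "ne \<ge> 0" "- p \<le> a * ne" "ne \<le> \<beta> * \<rho> * a"
  shows "(\<beta> * \<eta>\<^sup>2 - \<eta>) * p + \<beta> * \<eta>\<^sup>2 / 2 * ne\<^sup>2 \<le> \<eta> * \<beta> * \<rho> * a\<^sup>2"
proof -
  define X where "X = \<beta> * \<eta>"
  define Y where "Y = \<beta> * \<rho>"
  have X: "0 < X" "X < 1" using assms by (auto simp: X_def)
  have Y: "0 < Y" "Y < 1/2" using assms by (auto simp: Y_def)
  have 1: "(\<beta> * \<eta>\<^sup>2 - \<eta>) * p = \<eta> * (1 - X) * (- p)" by (simp add: X_def power2_eq_square algebra_simps)
  have "\<eta> * (1 - X) * (- p) \<le> \<eta> * (1 - X) * (a * ne)"
    using assms X by (intro mult_left_mono) auto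
  also have "\<dots> \<le> \<eta> * (1 - X) * (a * (Y * a))"
    using assms X by (intro mult_left_mono) (auto simp: Y_def)
  finally have A: "(\<beta> * \<eta>\<^sup>2 - \<eta>) * p \<le> \<eta> * (1 - X) * Y * a\<^sup>2"
    unfolding 1 by (simp add: power2_eq_square mult.assoc mult.left_commute[of a Y])
  have "ne\<^sup>2 \<le> (Y * a)\<^sup>2" using assms by (intro power_mono) (auto simp: Y_def)
  hence "\<beta> * \<eta>\<^sup>2 / 2 * ne\<^sup>2 \<le> \<beta> * \<eta>\<^sup>2 / 2 * (Y * a)\<^sup>2"
    using assms by (intro mult_left_mono) auto
  also have "\<dots> = \<eta> * (X * Y / 2) * Y * a\<^sup>2" by (simp add: X_def power2_eq_square)
  also have "\<dots> \<le> \<eta> * X * Y * a\<^sup>2"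
  proof -
    have "X * Y / 2 \<le> X" using X Y by (simp add: mult_left_le)
    thus ?thesis using assms Y by (intro mult_right_mono mult_left_mono) auto
  qed
  finally have B: "\<beta> * \<eta>\<^sup>2 / 2 * ne\<^sup>2 \<le> \<eta> * X * Y * a\<^sup>2" .
  have "\<eta> * (1 - X) * Y * a\<^sup>2 + \<eta> * X * Y * a\<^sup>2 = \<eta> * \<beta> * \<rho> * a\<^sup>2"
    by (simp add: Y_def algebra_simps)
  thus ?thesis using A B by linarith
qed
theorem theorem2:
  fixes loss :: "'p \<Rightarrow> 'y \<Rightarrow> real"
    and f :: "'x \<Rightarrow> 'w::euclidean_space \<Rightarrow> 'p"
    and n :: nat and D :: "nat \<Rightarrow> 'x \<times> 'y"
    and G :: "'w \<Rightarrow> 'w"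
    and \<beta> \<eta> \<rho> :: real and T :: nat
    and w :: "nat \<Rightarrow> 'w" and \<xi> :: "nat \<Rightarrow> real"
  assumes grad: "\<And>v. GDERIV (emp_loss loss f n D) v :> G v"
    and smooth: "\<And>u v. norm (G u - G v) \<le> \<beta> * norm (u - v)"
    and beta_pos: "\<beta> > 0"
    and eta_pos: "\<eta> > 0" and rho_pos: "\<rho> > 0"
    and rho_lt: "\<rho> < 1 / (2 * \<beta>)" and eta_lt: "\<eta> < 1 / \<beta>"
    and T_pos: "T \<ge> 1"
    and xi01: "\<And>t. t < T \<Longrightarrow> \<xi> t \<in> {0, 1}"
    and update: "\<And>t. t < T \<Longrightarrow>
       w (Suc t) = w t - \<eta> *\<^sub>R ((1 - \<xi> t) *\<^sub>R G (w t) + \<xi> t *\<^sub>R G (w t + \<rho> *\<^sub>R G (w t)))"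
  shows "Min {(norm (G (w t)))\<^sup>2 | t. t < T}
    \<le> (emp_loss loss f n D (w 0) - emp_loss loss f n D (w T)) /
       (real T * \<eta> * (1 - \<beta> * \<eta> / 2 - \<beta> * \<rho> * ((1 / real T) * (\<Sum>t<T. \<xi> t))))"
proof -
  define L where "L = emp_loss loss f n D"
  have gradL: "\<And>v. GDERIV L v :> G v" using grad by (simp add: L_def)
  define c where "c t = 1 - \<beta> * \<eta> / 2 - \<beta> * \<rho> * \<xi> t" for t
  have XY: "\<beta> * \<rho> < 1/2" "\<beta> * \<eta> < 1"
    using rho_lt eta_lt beta_pos by (auto simp: field_simps)
  have cpos: "c t > 0" if "t < T" for t
    using xi01[OF that] XY by (auto simp: c_def)
  have step: "L (w (Suc t)) \<le> L (w t) - \<eta> * c t * (norm (G (w t)))\<^sup>2" if t: "t < T" for t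
  proof -
    define g where "g = G (w t)"
    have D: "L (w (Suc t)) \<le> L (w t) + g \<bullet> (w (Suc t) - w t) + \<beta> / 2 * (norm (w (Suc t) - w t))\<^sup>2"
      using descent[OF gradL smooth] by (simp add: g_def)
    consider "\<xi> t = 0" | "\<xi> t = 1" using xi01[OF t] by auto
    then show ?thesis
    proof cases
      case 1
      have "w (Suc t) - w t = - (\<eta> *\<^sub>R g)" using update[OF t] 1 by (simp add: g_def)
      hence "L (w (Suc t)) \<le> L (w t) - \<eta> * (norm g)\<^sup>2 + \<beta> / 2 * \<eta>\<^sup>2 * (norm g)\<^sup>2"
        using D by (simp add: power_mult_distrib power2_norm_eq_inner)
      thus ?thesis using 1 by (simp add: c_def g_def algebra_simps power2_eq_square)
    next
      case 2
      define h where "h = G (w t + \<rho> *\<^sub>R g)"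
      define e where "e = h - g"
      have ne: "norm e \<le> \<beta> * \<rho> * norm g"
        using smooth[of "w t + \<rho> *\<^sub>R g" "w t"] rho_pos by (simp add: e_def h_def g_def)
      have cs: "- (g \<bullet> e) \<le> norm g * norm e"
        using norm_cauchy_schwarz[of "-g" e] by simp
      have "w (Suc t) - w t = - (\<eta> *\<^sub>R (g + e))" using update[OF t] 2 by (simp add: g_def e_def h_def)
      hence "L (w (Suc t)) \<le> L (w t) - \<eta> * (g \<bullet> (g + e)) + \<beta> / 2 * \<eta>\<^sup>2 * ((g + e) \<bullet> (g + e))"
        using D by (simp add: power_mult_distrib power2_norm_eq_inner[symmetric])
      also have "\<dots> = L (w t) - \<eta> * (1 - \<beta> * \<eta> / 2) * (norm g)\<^sup>2 + ((\<beta> * \<eta>\<^sup>2 - \<eta>) * (g \<bullet> e) + \<beta> * \<eta>\<^sup>2 / 2 * (norm e)\<^sup>2)"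
      proof -
        have q1: "(g + e) \<bullet> (g + e) = (norm g)\<^sup>2 + 2 * (g \<bullet> e) + (norm e)\<^sup>2"
          by (simp add: dot_square_norm[symmetric] inner_add_left inner_add_right inner_commute[of e g])
        have q2: "g \<bullet> (g + e) = (norm g)\<^sup>2 + g \<bullet> e"
          by (simp add: dot_square_norm[symmetric] inner_add_right)
        show ?thesis unfolding q1 q2 by (simp add: algebra_simps power2_eq_square)
      qed
      also have "\<dots> \<le> L (w t) - \<eta> * (1 - \<beta> * \<eta> / 2) * (norm g)\<^sup>2 + \<eta> * \<beta> * \<rho> * (norm g)\<^sup>2"
        using alg[OF beta_pos eta_pos rho_pos XY _ _ cs ne] by simp
      finally show ?thesis using 2 by (simp add: c_def g_def algebra_simps)
    qed
  qed
  define m where "m = Min {(norm (G (w t)))\<^sup>2 | t. t < T}"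
  have mle: "m \<le> (norm (G (w t)))\<^sup>2" if "t < T" for t
    unfolding m_def using that by (intro Min_le) auto
  have "m * (\<Sum>t<T. c t) = (\<Sum>t<T. m * c t)" by (simp add: sum_distrib_left)
  also have "\<dots> \<le> (\<Sum>t<T. (norm (G (w t)))\<^sup>2 * c t)"
    using mle cpos by (intro sum_mono mult_right_mono) (auto intro: less_imp_le)
  also have "\<dots> \<le> (\<Sum>t<T. (L (w t) - L (w (Suc t))) / \<eta>)"
    using step eta_pos by (intro sum_mono) (auto simp: field_simps)
  also have "\<dots> = (L (w 0) - L (w T)) / \<eta>"
    by (simp add: sum_divide_distrib[symmetric] sum_lessThan_telescope'[of "\<lambda>t. L (w t)"])
  finally have main: "m * (\<Sum>t<T. c t) \<le> (L (w 0) - L (w T)) / \<eta>" .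
  have sc: "(\<Sum>t<T. c t) = real T * (1 - \<beta> * \<eta> / 2 - \<beta> * \<rho> * ((1 / real T) * (\<Sum>t<T. \<xi> t)))"
  proof -
    have "(\<Sum>t<T. c t) = (\<Sum>t<T. (1 - \<beta> * \<eta> / 2) - \<beta> * \<rho> * \<xi> t)"
      by (simp add: c_def)
    also have "\<dots> = real T * (1 - \<beta> * \<eta> / 2) - \<beta> * \<rho> * (\<Sum>t<T. \<xi> t)"
      by (simp add: sum_subtractf sum_distrib_left)
    also have "\<dots> = real T * (1 - \<beta> * \<eta> / 2) - real T * (\<beta> * \<rho> * ((1 / real T) * (\<Sum>t<T. \<xi> t)))"
      using T_pos by simp
    finally show ?thesis by (simp only: right_diff_distrib)
  qed
  have spos: "(\<Sum>t<T. c t) > 0"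
    using T_pos cpos by (intro sum_pos) (auto simp: lessThan_empty_iff)
  have "m \<le> (L (w 0) - L (w T)) / (\<eta> * (\<Sum>t<T. c t))"
    using main spos eta_pos by (simp add: field_simps)
  thus ?thesis unfolding m_def L_def sc by (simp add: mult_ac)
qed

end
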